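(* Let $f(t)=\frac{1-e^{-t}}{t}$, let $a>0$, $b>0$, let $0<\lambda_1\le\lambda_2\le\dots\le\lambda_M$ and $0\le\bar x\le\sum_{m=1}^M\lambda_m$. Consider $$\max_{\bm c}\ \sum_{m=1}^M c_m f(a+bc_m)\quad\text{s.t.}\quad \sum_{m=1}^M c_m=\bar x,\quad 0\le c_m\le\lambda_m\ \forall m.$$ Then $g(c)=f(a+bc)+bc f'(a+bc)$ satisfies $g(c)\ge e^{-(a+bc)}>0$ and is strictly decreasing in $c\ge0$, and the problem has the unique optimal solution $c_m^*=\min\{\lambda_m,C_0\}$, $m=1,\dots,M$, where $C_0=\bar x/M$ if $\bar x/M\le\lambda_1$, and otherwise $C_0=\frac{\bar x-\sum_{i=1}^n\lambda_i}{M-n}$ for the index $n\in\{1,\dots,M-1\}$ with $\lambda_n<\frac{\bar x-\sum_{i=1}^n\lambda_i}{M-n}\le\lambda_{n+1}$ (equivalently, $C_0$ is such that $\sum_m\min\{\lambda_m,C_0\}=\bar x$).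
   Context: This is the inner problem $\mathcal{P}2.1$ of the unbiased case $B_1=\dots=B_M$, in which, for a fixed total caching density $\bar x=\sum_m c_m$, the active ratio $\rho$ is common to all groups and $\varphi_m=\pi R^2(\bar x+\lambda_B\theta_B+c_m\rho\theta_I)$; so $a=\pi R^2(\bar x+\lambda_B\theta_B)$, $b=\pi R^2\rho\theta_I$. $\lambda_m$ is the density of interested users in group $m$ and $c_m$ the caching density. *)

theory Defs
  imports "HOL-Analysis.Analysis"
begin

definition fcache :: "real \<Rightarrow> real" where
  "fcache t = (1 - exp (- t)) / t"

definition gcache :: "real \<Rightarrow> real \<Rightarrow> real \<Rightarrow> real" where
  "gcache a b c = fcache (a + b * c) + b * c * deriv fcache (a + b * c)"

definition objective :: "real \<Rightarrow> real \<Rightarrow> nat \<Rightarrow> (nat \<Rightarrow> real) \<Rightarrow> real" where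
  "objective a b M c = (\<Sum>m=1..M. c m * fcache (a + b * c m))"

definition feasible :: "nat \<Rightarrow> (nat \<Rightarrow> real) \<Rightarrow> real \<Rightarrow> (nat \<Rightarrow> real) \<Rightarrow> bool" where
  "feasible M lam xbar c \<longleftrightarrow> (\<Sum>m=1..M. c m) = xbar \<and> (\<forall>m\<in>{1..M}. 0 \<le> c m \<and> c m \<le> lam m)"

definition unique_opt :: "real \<Rightarrow> real \<Rightarrow> nat \<Rightarrow> (nat \<Rightarrow> real) \<Rightarrow> real \<Rightarrow> (nat \<Rightarrow> real) \<Rightarrow> bool" where
  "unique_opt a b M lam xbar c \<longleftrightarrow> feasible M lam xbar c \<and>
     (\<forall>d. feasible M lam xbar d \<longrightarrow> objective a b M d \<le> objective a b M c) \<and>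
     (\<forall>d. feasible M lam xbar d \<and> objective a b M d = objective a b M c \<longrightarrow> (\<forall>m\<in>{1..M}. d m = c m))"

definition C0_spec :: "nat \<Rightarrow> (nat \<Rightarrow> real) \<Rightarrow> real \<Rightarrow> real \<Rightarrow> bool" where
  "C0_spec M lam xbar C0 \<longleftrightarrow>
     (xbar / real M \<le> lam 1 \<and> C0 = xbar / real M) \<or>
     (\<not> (xbar / real M \<le> lam 1) \<and>
      (\<exists>n\<in>{1..M-1}.
         lam n < (xbar - (\<Sum>i=1..n. lam i)) / real (M - n) \<and>
         (xbar - (\<Sum>i=1..n. lam i)) / real (M - n) \<le> lam (n + 1) \<and>
         C0 = (xbar - (\<Sum>i=1..n. lam i)) / real (M - n)))"

end

theory Submission imports Defs begin

definition fd :: "real \<Rightarrow> real" where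
  "fd t = (t * exp (-t) - (1 - exp (-t))) / t^2"

lemma fcache_deriv: assumes "t \<noteq> 0" shows "(fcache has_real_derivative fd t) (at t)"
proof -
  have "((\<lambda>t. (1 - exp (-t)) / t) has_real_derivative
        ((exp (-t)) * t - (1 - exp (-t)) * 1) / (t*t)) (at t)"
    using assms by (auto intro!: derivative_eq_intros)
  moreover have "((exp (-t)) * t - (1 - exp (-t)) * 1) / (t*t) = fd t"
    unfolding fd_def by (simp add: power2_eq_square algebra_simps)
  ultimately show ?thesis unfolding fcache_def[abs_def] by simp
qed

definition kk :: "real \<Rightarrow> real" where
  "kk t = (1 - exp (-t) - t * exp (-t)) / t^2"

lemma gcache_eq: assumes "a + b*c > 0"
  shows "gcache a b c = exp (-(a+b*c)) + a * kk (a+b*c)"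
proof -
  define t where "t = a + b*c"
  have t: "t > 0" using assms t_def by simp
  have "deriv fcache t = fd t" using fcache_deriv[of t] t by (simp add: DERIV_imp_deriv)
  hence "gcache a b c = fcache t + (t - a) * fd t" unfolding gcache_def t_def by simp
  also have "\<dots> = exp (-t) + a * kk t"
    unfolding fcache_def fd_def kk_def using t
    by (simp add: field_simps power2_eq_square)
  finally show ?thesis by (simp add: t_def)
qed

lemma kk_nonneg: "t > 0 \<Longrightarrow> kk t \<ge> 0"
proof -
  assume t: "t > 0"
  have "1 + t \<le> exp t" by (rule exp_ge_add_one_self)
  hence "(1 + t) * exp (-t) \<le> exp t * exp (-t)" by (simp add: mult_right_mono)
  hence "(1 + t) * exp (-t) \<le> 1" by (simp add: exp_minus_inverse)
  thus ?thesis unfolding kk_def by (simp add: algebra_simps)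
qed

lemma kk_deriv: "t \<noteq> 0 \<Longrightarrow> (kk has_real_derivative
   ((exp (-t) - exp (-t) + t * exp (-t)) * t^2 - (1 - exp (-t) - t * exp (-t)) * (2*t)) / (t^2*t^2)) (at t)"
  unfolding kk_def[abs_def]
  by (auto intro!: derivative_eq_intros simp: power2_eq_square algebra_simps)

lemma kk_mono: assumes "0 < t1" "t1 \<le> t2" shows "kk t2 \<le> kk t1"
proof (rule DERIV_nonpos_imp_nonincreasing[OF assms(2)])
  fix x assume x: "t1 \<le> x" "x \<le> t2"
  hence xp: "x > 0" using assms by simp
  have q: "1 + x + x^2/2 \<le> exp x" using xp by (intro exp_lower_Taylor_quadratic) simp
  hence "(1 + x + x^2/2) * exp (-x) \<le> exp x * exp (-x)" by (simp add: mult_right_mono)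
  hence q2: "(1 + x + x^2/2) * exp (-x) \<le> 1" by (simp add: exp_minus_inverse)
  have "(exp (-x) - exp (-x) + x * exp (-x)) * x^2 - (1 - exp (-x) - x * exp (-x)) * (2*x)
      = 2 * x * ((1 + x + x^2/2) * exp (-x) - 1)" by (simp add: power2_eq_square algebra_simps)
  also have "\<dots> \<le> 0" using xp q2 by (simp add: mult_nonneg_nonpos)
  finally have "((exp (-x) - exp (-x) + x * exp (-x)) * x^2 - (1 - exp (-x) - x * exp (-x)) * (2*x)) / (x^2*x^2) \<le> 0"
    by (intro divide_nonpos_pos) (use xp in auto)
  thus "\<exists>y. DERIV kk x :> y \<and> y \<le> 0" using kk_deriv[of x] xp by auto
qed

lemma g_lower: assumes "a > 0" "b > 0" "c \<ge> 0"
  shows "exp (- (a + b * c)) \<le> gcache a b c"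
proof -
  have "a + b*c > 0" using assms by (simp add: add_pos_nonneg)
  thus ?thesis using gcache_eq[of a b c] kk_nonneg[of "a+b*c"] assms by simp
qed

lemma g_strict: assumes "a > 0" "b > 0" "0 \<le> c1" "c1 < c2"
  shows "gcache a b c2 < gcache a b c1"
proof -
  have p1: "a + b*c1 > 0" using assms by (simp add: add_pos_nonneg)
  have lt: "a + b*c1 < a + b*c2" using assms by simp
  hence p2: "a + b*c2 > 0" using p1 by simp
  have "exp (-(a+b*c2)) < exp (-(a+b*c1))" using lt by (simp only: exp_less_cancel_iff neg_less_iff_less)
  moreover have "a * kk (a+b*c2) \<le> a * kk (a+b*c1)"
    using kk_mono[OF p1 less_imp_le[OF lt]] assms by (simp add: mult_left_mono)
  ultimately show ?thesis unfolding gcache_eq[OF p1] gcache_eq[OF p2] by linarith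
qed

lemma h_deriv: assumes "a > 0" "b > 0" "c \<ge> 0"
  shows "((\<lambda>c. c * fcache (a + b*c)) has_real_derivative gcache a b c) (at c)"
proof -
  have p: "a + b*c > 0" using assms by (simp add: add_pos_nonneg)
  have d: "(fcache has_real_derivative fd (a+b*c)) (at (a+b*c))"
    using fcache_deriv p by simp
  have "((\<lambda>c. c * fcache (a + b*c)) has_real_derivative
      1 * fcache (a+b*c) + (fd (a+b*c) * (0 + b * 1)) * c) (at c)"
  proof (rule DERIV_mult)
    show "((\<lambda>c. fcache (a + b*c)) has_real_derivative fd (a+b*c) * (0 + b * 1)) (at c)"
      by (rule DERIV_chain2[where g="\<lambda>c. a + b*c", OF d]) (auto intro!: derivative_eq_intros)
  qed (rule DERIV_ident)
  moreover have "deriv fcache (a+b*c) = fd (a+b*c)" using d by (rule DERIV_imp_deriv)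
  ultimately show ?thesis unfolding gcache_def by (simp add: algebra_simps)
qed

lemma h_tangent: assumes "a > 0" "b > 0" "x \<ge> 0" "y \<ge> 0" "x \<noteq> y"
  shows "y * fcache (a+b*y) < x * fcache (a+b*x) + gcache a b x * (y - x)"
proof (cases "x < y")
  case True
  obtain z where z: "x < z" "z < y" "y * fcache (a+b*y) - x * fcache (a+b*x) = (y - x) * gcache a b z"
    using MVT2[OF True, of "\<lambda>c. c * fcache (a + b*c)" "gcache a b"] h_deriv assms by force
  have "gcache a b z < gcache a b x" using g_strict assms z by simp
  hence "(y - x) * gcache a b z < (y - x) * gcache a b x" using True by simp
  thus ?thesis using z by (simp add: algebra_simps)
next
  case False
  hence F: "y < x" using assms by simp
  obtain z where z: "y < z" "z < x" "x * fcache (a+b*x) - y * fcache (a+b*y) = (x - y) * gcache a b z"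
    using MVT2[OF F, of "\<lambda>c. c * fcache (a + b*c)" "gcache a b"] h_deriv assms by force
  have "gcache a b x < gcache a b z" using g_strict assms z by simp
  hence "(x - y) * gcache a b x < (x - y) * gcache a b z" using F by simp
  thus ?thesis using z by (simp add: algebra_simps)
qed

lemma h_tangent_le: assumes "a > 0" "b > 0" "x \<ge> 0" "y \<ge> 0"
  shows "y * fcache (a+b*y) \<le> x * fcache (a+b*x) + gcache a b x * (y - x)"
  using h_tangent[OF assms] by (cases "x = y") force+

lemma lam_mono:
  fixes lam :: "nat \<Rightarrow> real" and i j M :: nat
  assumes "\<forall>m\<in>{1..<M}. lam m \<le> lam (m + 1)" "1 \<le> i" "i \<le> j" "j \<le> M"
  shows "lam i \<le> lam j"
  using assms(3,4)
proof (induction j rule: dec_induct)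
  case base thus ?case by simp
next
  case (step k)
  hence "lam k \<le> lam (k+1)" using assms(1,2) by auto
  thus ?case using step by simp
qed

lemma C0_exists:
  fixes xbar :: real and M :: nat and lam :: "nat \<Rightarrow> real"
  assumes "M \<ge> 1" "xbar \<le> (\<Sum>m=1..M. lam m)"
  shows "\<exists>C0. C0_spec M lam xbar C0"
proof (cases "xbar / real M \<le> lam 1")
  case True thus ?thesis unfolding C0_spec_def by blast
next
  case False
  define S where "S n = (\<Sum>i=1..n. lam i)" for n
  define phi where "phi n = S n + real (M - n) * lam n" for n
  have M2: "M \<ge> 2"
  proof (rule ccontr)
    assume "\<not> M \<ge> 2" hence "M = 1" using assms by simp
    thus False using False assms by simp
  qed
  define N where "N = {n\<in>{1..M-1}. phi n < xbar}"
  have "phi 1 = real M * lam 1" unfolding phi_def S_def using assms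
    by (simp add: of_nat_diff algebra_simps)
  also have "\<dots> < xbar"
  proof -
    have "real M > 0" using assms by simp
    thus ?thesis using False by (simp add: not_le pos_less_divide_eq mult.commute)
  qed
  finally have "1 \<in> N" unfolding N_def using M2 by simp
  have fN: "finite N" unfolding N_def by simp
  define n where "n = Max N"
  have nN: "n \<in> N" unfolding n_def using fN \<open>1 \<in> N\<close> by (intro Max_in) auto
  hence n1: "1 \<le> n" "n \<le> M - 1" "phi n < xbar" unfolding N_def by auto
  have "xbar \<le> phi (n+1)"
  proof (cases "n + 1 \<le> M - 1")
    case True
    have "n + 1 \<notin> N" using Max_ge[OF fN, of "n+1"] unfolding n_def[symmetric] by auto
    thus ?thesis using True unfolding N_def by auto
  next
    case False
    hence "n + 1 = M" using n1 by simp
    thus ?thesis unfolding phi_def S_def using assms by simp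
  qed
  have Mn: "real (M - n) > 0" using n1 M2 by simp
  have Sn1: "S (n+1) = S n + lam (n+1)" unfolding S_def by simp
  have rM: "real (M - (n+1)) = real (M - n) - 1" using n1 M2 by (simp add: of_nat_diff)
  have A: "lam n < (xbar - S n) / real (M - n)"
    using n1(3) Mn unfolding phi_def by (simp add: pos_less_divide_eq algebra_simps)
  have B: "(xbar - S n) / real (M - n) \<le> lam (n+1)"
    using \<open>xbar \<le> phi (n+1)\<close> Mn unfolding phi_def Sn1 rM by (simp add: pos_divide_le_eq algebra_simps)
  have "n \<in> {1..M-1}" using n1 by simp
  hence "C0_spec M lam xbar ((xbar - S n) / real (M - n))"
    unfolding C0_spec_def using False A B unfolding S_def by blast
  thus ?thesis by blast
qed

lemma C0_feasible:
  fixes xbar :: real and M :: nat and lam :: "nat \<Rightarrow> real"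
  assumes "M \<ge> 1" "0 < lam 1" "\<forall>m\<in>{1..<M}. lam m \<le> lam (m + 1)" "0 \<le> xbar"
    and spec: "C0_spec M lam xbar C0"
  shows "0 \<le> C0 \<and> (\<Sum>m=1..M. min (lam m) C0) = xbar"
  using spec unfolding C0_spec_def
proof (elim disjE conjE bexE)
  assume le: "xbar / real M \<le> lam 1" and C: "C0 = xbar / real M"
  have "\<And>m. m \<in> {1..M} \<Longrightarrow> min (lam m) C0 = C0"
    using lam_mono[OF assms(3)] le C by force
  hence "(\<Sum>m=1..M. min (lam m) C0) = (\<Sum>m=1..M. C0)" by simp
  also have "\<dots> = xbar" using C assms by simp
  finally show ?thesis using C assms by simp
next
  fix n assume n: "n \<in> {1..M-1}"
    and A: "lam n < (xbar - (\<Sum>i=1..n. lam i)) / real (M - n)"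
    and B: "(xbar - (\<Sum>i=1..n. lam i)) / real (M - n) \<le> lam (n + 1)"
    and C: "C0 = (xbar - (\<Sum>i=1..n. lam i)) / real (M - n)"
  have "lam 1 \<le> lam n" using lam_mono[OF assms(3)] n by auto
  hence C0pos: "0 \<le> C0" using A C assms by simp
  have Mn: "real (M - n) > 0" using n by auto
  have spl: "(\<Sum>m=1..M. min (lam m) C0) = (\<Sum>m=1..n. min (lam m) C0) + (\<Sum>m=n+1..n+(M-n). min (lam m) C0)"
    using n sum.ub_add_nat[of 1 n "\<lambda>m. min (lam m) C0" "M-n"] by auto
  have s1: "(\<Sum>m=1..n. min (lam m) C0) = (\<Sum>m=1..n. lam m)"
  proof (rule sum.cong)
    fix m assume "m \<in> {1..n}"
    hence "lam m \<le> lam n" using lam_mono[OF assms(3)] n by auto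
    thus "min (lam m) C0 = lam m" using A C by simp
  qed simp
  have s2: "(\<Sum>m=n+1..n+(M-n). min (lam m) C0) = (\<Sum>m=n+1..n+(M-n). C0)"
  proof (rule sum.cong)
    fix m assume "m \<in> {n+1..n+(M-n)}"
    hence "lam (n+1) \<le> lam m" using lam_mono[OF assms(3)] n by auto
    thus "min (lam m) C0 = C0" using B C by simp
  qed simp
  have "(\<Sum>m=n+1..n+(M-n). C0) = real (M - n) * C0" by simp
  also have "\<dots> = xbar - (\<Sum>i=1..n. lam i)" using C Mn by simp
  finally show ?thesis using spl s1 s2 C0pos by simp
qed

lemma optimal:
  fixes xbar a b :: real and M :: nat and lam :: "nat \<Rightarrow> real"
  assumes ab: "a > 0" "b > 0" and C0: "0 \<le> C0" and sumc: "(\<Sum>m=1..M. min (lam m) C0) = xbar"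
    and fd: "feasible M lam xbar d"
  defines "c \<equiv> (\<lambda>m. min (lam m) C0)"
  shows "objective a b M d \<le> objective a b M c \<and>
    (objective a b M d = objective a b M c \<longrightarrow> (\<forall>m\<in>{1..M}. d m = c m))"
proof -
  define h where "h x = x * fcache (a + b*x)" for x
  define T where "T m = h (c m) + gcache a b (c m) * (d m - c m)" for m
  have d: "\<And>m. m \<in> {1..M} \<Longrightarrow> 0 \<le> d m \<and> d m \<le> lam m" and sd: "(\<Sum>m=1..M. d m) = xbar"
    using fd unfolding feasible_def by auto
  have cnn: "\<And>m. m \<in> {1..M} \<Longrightarrow> 0 \<le> c m" unfolding c_def using d C0 by force
  have le1: "\<And>m. m \<in> {1..M} \<Longrightarrow> h (d m) \<le> T m"
    unfolding h_def T_def using h_tangent_le[OF ab cnn d[THEN conjunct1]] by simp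
  have lt1: "\<And>m. m \<in> {1..M} \<Longrightarrow> d m \<noteq> c m \<Longrightarrow> h (d m) < T m"
    unfolding h_def T_def using h_tangent[OF ab cnn d[THEN conjunct1]] by simp
  have le2: "T m \<le> h (c m) + gcache a b C0 * (d m - c m)" if m: "m \<in> {1..M}" for m
  proof (cases "C0 \<le> lam m")
    case True thus ?thesis unfolding T_def c_def by simp
  next
    case False
    hence cm: "c m = lam m" unfolding c_def by simp
    have "0 \<le> lam m" using d[OF m] by simp
    hence "gcache a b C0 < gcache a b (lam m)" using g_strict ab False by simp
    moreover have "d m - c m \<le> 0" using d[OF m] cm by simp
    ultimately have "gcache a b (c m) * (d m - c m) \<le> gcache a b C0 * (d m - c m)"
      using cm by (simp add: mult_right_mono_neg)
    thus ?thesis unfolding T_def by simp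
  qed
  have "(\<Sum>m=1..M. T m) \<le> (\<Sum>m=1..M. h (c m) + gcache a b C0 * (d m - c m))"
    by (rule sum_mono) (use le2 in auto)
  also have "\<dots> = (\<Sum>m=1..M. h (c m)) + gcache a b C0 * ((\<Sum>m=1..M. d m) - (\<Sum>m=1..M. c m))"
    by (simp add: sum.distrib sum_distrib_left[symmetric] sum_subtractf)
  also have "\<dots> = (\<Sum>m=1..M. h (c m))" using sd sumc unfolding c_def by simp
  finally have ST: "(\<Sum>m=1..M. T m) \<le> (\<Sum>m=1..M. h (c m))" .
  have od: "objective a b M d = (\<Sum>m=1..M. h (d m))" and oc: "objective a b M c = (\<Sum>m=1..M. h (c m))"
    unfolding objective_def h_def by simp_all
  have "(\<Sum>m=1..M. h (d m)) \<le> (\<Sum>m=1..M. T m)" by (rule sum_mono) (use le1 in auto)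
  hence part1: "objective a b M d \<le> objective a b M c" using ST od oc by simp
  have part2: "\<forall>m\<in>{1..M}. d m = c m" if eq: "objective a b M d = objective a b M c"
  proof (rule ccontr)
    assume "\<not> (\<forall>m\<in>{1..M}. d m = c m)"
    then obtain k where k: "k \<in> {1..M}" "d k \<noteq> c k" by auto
    have "(\<Sum>m=1..M. h (d m)) < (\<Sum>m=1..M. T m)"
    proof (rule sum_strict_mono_ex1)
      show "\<exists>a\<in>{1..M}. h (d a) < T a" using lt1[OF k] k(1) by blast
    qed (use le1 in auto)
    thus False using ST od oc eq by simp
  qed
  show ?thesis using part1 part2 by blast
qed

theorem mainTheorem6:
  fixes a b xbar :: real and M :: nat and lam :: "nat \<Rightarrow> real"
  assumes "a > 0" and "b > 0" and "M \<ge> 1"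
    and "0 < lam 1" and "\<forall>m\<in>{1..<M}. lam m \<le> lam (m + 1)"
    and "0 \<le> xbar" and "xbar \<le> (\<Sum>m=1..M. lam m)"
  shows "(\<forall>c\<ge>0. exp (- (a + b * c)) \<le> gcache a b c \<and> 0 < exp (- (a + b * c)))
    \<and> (\<forall>c1 c2. 0 \<le> c1 \<longrightarrow> c1 < c2 \<longrightarrow> gcache a b c2 < gcache a b c1)
    \<and> (\<exists>C0. C0_spec M lam xbar C0)
    \<and> (\<forall>C0. C0_spec M lam xbar C0 \<longrightarrow>
          unique_opt a b M lam xbar (\<lambda>m. min (lam m) C0))"
proof (intro conjI allI impI)
  fix c :: real assume "0 \<le> c"
  thus "exp (- (a + b * c)) \<le> gcache a b c" using g_lower assms by simp
  show "0 < exp (- (a + b * c))" by simp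
next
  fix c1 c2 :: real assume "0 \<le> c1" "c1 < c2"
  thus "gcache a b c2 < gcache a b c1" using g_strict assms by simp
next
  show "\<exists>C0. C0_spec M lam xbar C0" using C0_exists assms by simp
next
  fix C0 assume sp: "C0_spec M lam xbar C0"
  have F: "0 \<le> C0" "(\<Sum>m=1..M. min (lam m) C0) = xbar"
    using C0_feasible[OF assms(3,4,5,6) sp] by auto
  have feas: "feasible M lam xbar (\<lambda>m. min (lam m) C0)"
    unfolding feasible_def using F assms lam_mono[OF assms(5), of 1] by force
  show "unique_opt a b M lam xbar (\<lambda>m. min (lam m) C0)"
    unfolding unique_opt_def using feas optimal[OF assms(1,2) F] by blast
qed

end
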